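(* For every prime power $q$ and all $k,m\in\mathbb{N}$, there exists an $m$-multiplication-friendly collection $(C^{(h)};\mathrm{Enc}^{(h)})_{h\in[m]}$ of $[n,k]_q$ classical codes, where $n=q^{m(k-1)}$.
   Context: $x*y$ is the componentwise product in $\mathbb{F}_q^n$. An encoding function of an $[n,k]_q$ classical (linear) code $C\subseteq\mathbb{F}_q^n$ is an $\mathbb{F}_q$-linear isomorphism $\mathrm{Enc}:\mathbb{F}_{q^k}\to C$ (viewing $\mathbb{F}_{q^k}$ as a $k$-dimensional $\mathbb{F}_q$-space). A collection $(C^{(h)};\mathrm{Enc}^{(h)})_{h\in[m]}$ of $[n,k]_q$ codes is $m$-multiplication-friendly if there is an $\mathbb{F}_q$-linear $\mathrm{Dec}:\mathbb{F}_q^n\to\mathbb{F}_{q^k}$ with $z_1\cdots z_m=\mathrm{Dec}(\mathrm{Enc}^{(1)}(z_1)*\cdots*\mathrm{Enc}^{(m)}(z_m))$ for all $z_1,\dots,z_m\in\mathbb{F}_{q^k}$. *)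

theory Defs
  imports Main
begin

text \<open>F_q is modelled by a finite field type 'a (q = CARD('a)), and F_{q^k} by a finite
field type 'b together with an embedding emb of F_q into it, with CARD('b) = q^k.
The F_q-vector space structure on 'b is  c \<cdot> z = emb c * z .
Vectors of F_q^n are functions nat \<Rightarrow> 'a vanishing outside {0..<n}.\<close>

definition field_emb :: "('a::field \<Rightarrow> 'b::field) \<Rightarrow> bool" where
  "field_emb emb \<longleftrightarrow> emb 1 = 1 \<and> (\<forall>a b. emb (a + b) = emb a + emb b)
     \<and> (\<forall>a b. emb (a * b) = emb a * emb b)"

definition Fvec :: "nat \<Rightarrow> (nat \<Rightarrow> 'a::zero) set" where
  "Fvec n = {v. \<forall>i\<ge>n. v i = 0}"

definition cwprod :: "(nat \<Rightarrow> 'a::times) \<Rightarrow> (nat \<Rightarrow> 'a) \<Rightarrow> nat \<Rightarrow> 'a" (infixl "\<star>" 70) where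
  "x \<star> y = (\<lambda>i. x i * y i)"

definition enc_linear :: "('a::field \<Rightarrow> 'b::field) \<Rightarrow> ('b \<Rightarrow> nat \<Rightarrow> 'a) \<Rightarrow> bool" where
  "enc_linear emb E \<longleftrightarrow> (\<forall>z w. E (z + w) = (\<lambda>i. E z i + E w i))
     \<and> (\<forall>c z. E (emb c * z) = (\<lambda>i. c * E z i))"

definition dec_linear :: "('a::field \<Rightarrow> 'b::field) \<Rightarrow> nat \<Rightarrow> ((nat \<Rightarrow> 'a) \<Rightarrow> 'b) \<Rightarrow> bool" where
  "dec_linear emb n D \<longleftrightarrow> (\<forall>x\<in>Fvec n. \<forall>y\<in>Fvec n. D (\<lambda>i. x i + y i) = D x + D y)
     \<and> (\<forall>c. \<forall>x\<in>Fvec n. D (\<lambda>i. c * x i) = emb c * D x)"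

definition lin_code :: "nat \<Rightarrow> (nat \<Rightarrow> 'a::field) set \<Rightarrow> bool" where
  "lin_code n C \<longleftrightarrow> C \<subseteq> Fvec n \<and> (\<lambda>i. 0) \<in> C \<and> (\<forall>x\<in>C. \<forall>y\<in>C. (\<lambda>i. x i + y i) \<in> C)
     \<and> (\<forall>c. \<forall>x\<in>C. (\<lambda>i. c * x i) \<in> C)"

text \<open>(C, Enc) is an [n,k]_q code with encoding function Enc : F_{q^k} \<rightarrow> C
  (an F_q-linear isomorphism onto C; dimension k is then automatic since dim F_{q^k} = k).\<close>
definition coded :: "('a::field \<Rightarrow> 'b::field) \<Rightarrow> nat \<Rightarrow> (nat \<Rightarrow> 'a) set \<Rightarrow> ('b \<Rightarrow> nat \<Rightarrow> 'a) \<Rightarrow> bool" where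
  "coded emb n C E \<longleftrightarrow> lin_code n C \<and> enc_linear emb E \<and> bij_betw E UNIV C"

definition mult_friendly ::
  "('a::field \<Rightarrow> 'b::field) \<Rightarrow> nat \<Rightarrow> nat \<Rightarrow> (nat \<Rightarrow> (nat \<Rightarrow> 'a) set) \<Rightarrow> (nat \<Rightarrow> 'b \<Rightarrow> nat \<Rightarrow> 'a) \<Rightarrow> bool" where
  "mult_friendly emb n m C Enc \<longleftrightarrow>
     (\<exists>Dec. dec_linear emb n Dec \<and>
        (\<forall>z :: nat \<Rightarrow> 'b. (\<Prod>h<m. z h) = Dec (\<lambda>i. \<Prod>h<m. Enc h (z h) i)))"

end

theory Submission imports Defs "HOL.Vector_Spaces" "HOL-Library.FuncSet" begin

lemma basis_ex:
  fixes emb :: "'a::{finite,field} \<Rightarrow> 'b::{finite,field}"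
  assumes fe: "field_emb emb" and cd: "card (UNIV :: 'b set) = card (UNIV :: 'a set) ^ k"
  shows "\<exists>r (\<beta>::nat \<Rightarrow> 'b) (c :: nat \<Rightarrow> 'b \<Rightarrow> 'a). r \<le> k \<and>
     (\<forall>j z w. c j (z+w) = c j z + c j w) \<and> (\<forall>j a z. c j (emb a * z) = a * c j z)
     \<and> (\<forall>z. z = (\<Sum>j<r. emb (c j z) * \<beta> j))"
proof -
  have e1: "emb 1 = 1" and ea: "\<And>a b. emb (a + b) = emb a + emb b"
    and em: "\<And>a b. emb (a * b) = emb a * emb b" using fe unfolding field_emb_def by auto
  interpret V: vector_space "\<lambda>c z. emb c * z"
    by unfold_locales (auto simp: ea em e1 algebra_simps)
  obtain B where B: "V.independent B" "UNIV \<subseteq> V.span B"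
    using V.basis_exists[of UNIV] by blast
  have spB: "V.span B = UNIV" using B by auto
  have finB: "finite B" by simp
  define g where "g f = (\<Sum>b\<in>B. emb (f b) * b)" for f :: "'b \<Rightarrow> 'a"
  have inj: "inj_on g (PiE B (\<lambda>_. UNIV))"
  proof (rule inj_onI)
    fix f f' assume f: "f \<in> PiE B (\<lambda>_. UNIV)" and f': "f' \<in> PiE B (\<lambda>_. UNIV)" and eq: "g f = g f'"
    have s0: "(\<Sum>b\<in>B. emb (f b - f' b) * b) = 0"
    proof -
      have "emb (f b - f' b) = emb (f b) - emb (f' b)" for b
        using ea[of "f b - f' b" "f' b"] by simp
      hence "(\<Sum>b\<in>B. emb (f b - f' b) * b) = (\<Sum>b\<in>B. emb (f b) * b - emb (f' b) * b)"
        by (simp add: left_diff_distrib)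
      also have "\<dots> = g f - g f'" by (simp add: g_def sum_subtractf)
      finally have "(\<Sum>b\<in>B. emb (f b - f' b) * b) = g f - g f'" .
      thus ?thesis using eq by simp
    qed
    have "\<forall>b\<in>B. f b - f' b = 0"
      using V.independentD[OF B(1) finB subset_refl s0] by blast
    thus "f = f'" using f f' by (auto simp: PiE_iff extensional_def intro!: ext)
  qed
  have "card (PiE B (\<lambda>_. UNIV :: 'a set)) \<le> card (UNIV :: 'b set)"
    by (rule card_inj_on_le[OF inj]) auto
  hence "card (UNIV :: 'a set) ^ card B \<le> card (UNIV :: 'a set) ^ k"
    using cd by (simp add: card_PiE finB)
  moreover have "card (UNIV :: 'a set) \<ge> 2"
  proof -
    have "{0::'a, 1} \<subseteq> UNIV" by simp
    hence "card {0::'a,1} \<le> card (UNIV::'a set)" by (rule card_mono[rotated]) simp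
    thus ?thesis by simp
  qed
  ultimately have rk: "card B \<le> k" by (simp add: power_le_imp_le_exp)
  obtain \<phi> where phi: "bij_betw \<phi> {0..<card B} B" using ex_bij_betw_nat_finite[OF finB] by blast
  define c where "c j z = V.representation B z (\<phi> j)" for j z
  have c1: "\<forall>j z w. c j (z+w) = c j z + c j w"
    unfolding c_def using V.representation_add[OF B(1)] spB by simp
  have c2: "\<forall>j a z. c j (emb a * z) = a * c j z"
    unfolding c_def using V.representation_scale[OF B(1)] spB by simp
  have c3: "\<forall>z. z = (\<Sum>j<card B. emb (c j z) * \<phi> j)"
  proof
    fix z
    have "z = (\<Sum>b\<in>B. emb (V.representation B z b) * b)"
      using V.sum_representation_eq[OF B(1) _ finB subset_refl, of z] spB by simp
    also have "\<dots> = (\<Sum>j\<in>{0..<card B}. emb (c j z) * \<phi> j)"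
      unfolding c_def by (rule sum.reindex_bij_betw[OF phi, symmetric])
    finally show "z = (\<Sum>j<card B. emb (c j z) * \<phi> j)" by (simp add: atLeast0LessThan)
  qed
  show ?thesis using rk c1 c2 c3 by blast
qed

lemma k_le_pow: "(2::nat) \<le> q \<Longrightarrow> k \<le> q ^ (k - 1)"
proof (induction k)
  case (Suc k)
  show ?case
  proof (cases k)
    case 0 thus ?thesis by simp
  next
    case (Suc k')
    have "Suc k \<le> 2 * q ^ (k - 1)" using Suc.IH[OF Suc.prems] Suc by simp
    also have "\<dots> \<le> q * q ^ (k - 1)" using Suc.prems by simp
    finally show ?thesis using Suc by simp
  qed
qed simp

lemma emb_prod:
  fixes m :: nat
  assumes "field_emb emb"
  shows "emb (\<Prod>h<m. f h) = (\<Prod>h<m. emb (f h))"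
  using assms by (induction m) (auto simp: field_emb_def)

theorem lemma4p5:
  fixes emb :: "'a::{finite,field} \<Rightarrow> 'b::{finite,field}"
    and k m :: nat
  assumes "field_emb emb"
    and "card (UNIV :: 'b set) = card (UNIV :: 'a set) ^ k"
  shows "\<exists>(C :: nat \<Rightarrow> (nat \<Rightarrow> 'a) set) (Enc :: nat \<Rightarrow> 'b \<Rightarrow> nat \<Rightarrow> 'a).
           (\<forall>h<m. coded emb (card (UNIV :: 'a set) ^ (m * (k - 1))) (C h) (Enc h))
           \<and> mult_friendly emb (card (UNIV :: 'a set) ^ (m * (k - 1))) m C Enc"
proof -
  have e1: "emb 1 = 1" and ea: "\<And>a b. emb (a + b) = emb a + emb b"
    and em: "\<And>a b. emb (a * b) = emb a * emb b" using assms(1) unfolding field_emb_def by auto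
  obtain r and \<beta> :: "nat \<Rightarrow> 'b" and c :: "nat \<Rightarrow> 'b \<Rightarrow> 'a" where rk: "r \<le> k"
    and c1: "\<And>j z w. c j (z+w) = c j z + c j w" and c2: "\<And>j a z. c j (emb a * z) = a * c j z"
    and c3: "\<And>z. z = (\<Sum>j<r. emb (c j z) * \<beta> j)"
    using basis_ex[OF assms] by blast
  have c0: "c j 0 = 0" for j using c2[of j 0 0] by simp
  define q where "q = card (UNIV :: 'a set)"
  define n where "n = q ^ (m * (k - 1))"
  have q2: "q \<ge> 2"
  proof -
    have "{0::'a, 1} \<subseteq> UNIV" by simp
    hence "card {0::'a,1} \<le> card (UNIV::'a set)" by (rule card_mono[rotated]) simp
    thus ?thesis by (simp add: q_def)
  qed
  define T where "T = PiE {..<m} (\<lambda>_. {..<r})"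
  define N where "N = card T"
  have finT: "finite T" unfolding T_def by (simp add: finite_PiE)
  have NT: "N = r ^ m" unfolding N_def T_def by (simp add: card_PiE)
  have Nn: "N \<le> n"
  proof -
    have "N \<le> k ^ m" using NT rk by (simp add: power_mono)
    also have "\<dots> \<le> (q ^ (k - 1)) ^ m" using k_le_pow[OF q2] by (simp add: power_mono)
    also have "\<dots> = n" by (simp add: n_def power_mult[symmetric] mult.commute)
    finally show ?thesis .
  qed
  obtain \<phi> where phi: "bij_betw \<phi> {0..<N} T" using ex_bij_betw_nat_finite[OF finT] N_def by blast
  define Enc :: "nat \<Rightarrow> 'b \<Rightarrow> nat \<Rightarrow> 'a" where
    "Enc h z i = (if i < N then c (\<phi> i h) z else 0)" for h z i
  define C :: "nat \<Rightarrow> (nat \<Rightarrow> 'a) set" where "C h = range (Enc h)" for h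
  have lin: "enc_linear emb (Enc h)" for h
    unfolding enc_linear_def Enc_def by (auto simp: c1 c2 intro!: ext)
  have coded: "coded emb n (C h) (Enc h)" if hm: "h < m" for h
  proof -
    have inj: "inj (Enc h)"
    proof (rule injI)
      fix z w assume eq: "Enc h z = Enc h w"
      have "c j z = c j w" if j: "j < r" for j
      proof -
        define t where "t = (\<lambda>x. if x < m then j else undefined)"
        have "t \<in> T" unfolding T_def t_def using j by (auto simp: PiE_iff extensional_def)
        then obtain i where i: "i \<in> {0..<N}" "\<phi> i = t" using phi by (auto simp: bij_betw_def)
        have "Enc h z i = Enc h w i" using eq by simp
        thus ?thesis using i hm by (simp add: Enc_def t_def)
      qed
      hence "(\<Sum>j<r. emb (c j z) * \<beta> j) = (\<Sum>j<r. emb (c j w) * \<beta> j)" by simp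
      thus "z = w" using c3[of z] c3[of w] by simp
    qed
    have E0: "Enc h 0 = (\<lambda>i. 0)" by (auto simp: Enc_def c0)
    have "lin_code n (C h)"
      unfolding lin_code_def C_def
    proof (intro conjI ballI allI)
      show "range (Enc h) \<subseteq> Fvec n" using Nn by (auto simp: Fvec_def Enc_def)
      show "(\<lambda>i. 0) \<in> range (Enc h)" using E0 by (metis rangeI)
      fix x y assume "x \<in> range (Enc h)" "y \<in> range (Enc h)"
      then obtain z w where "x = Enc h z" "y = Enc h w" by auto
      thus "(\<lambda>i. x i + y i) \<in> range (Enc h)" using lin[of h] unfolding enc_linear_def
        by (metis rangeI)
    next
      fix a x assume "x \<in> range (Enc h)"
      then obtain z where "x = Enc h z" by auto
      thus "(\<lambda>i. a * x i) \<in> range (Enc h)" using lin[of h] unfolding enc_linear_def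
        by (metis rangeI)
    qed
    thus ?thesis unfolding coded_def C_def using lin inj by (simp add: bij_betw_def)
  qed
  define Dec :: "(nat \<Rightarrow> 'a) \<Rightarrow> 'b" where
    "Dec y = (\<Sum>i<N. emb (y i) * (\<Prod>h<m. \<beta> (\<phi> i h)))" for y
  have dl: "dec_linear emb n Dec"
    unfolding dec_linear_def Dec_def
    by (auto simp: ea em distrib_right sum.distrib sum_distrib_left mult.assoc)
  have prodid: "(\<Prod>h<m. z h) = Dec (\<lambda>i. \<Prod>h<m. Enc h (z h) i)" for z :: "nat \<Rightarrow> 'b"
  proof -
    have "Dec (\<lambda>i. \<Prod>h<m. Enc h (z h) i) =
        (\<Sum>i\<in>{0..<N}. \<Prod>h<m. emb (c (\<phi> i h) (z h)) * \<beta> (\<phi> i h))"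
      unfolding Dec_def Enc_def
      by (auto simp: emb_prod[OF assms(1)] prod.distrib atLeast0LessThan intro!: sum.cong)
    also have "\<dots> = (\<Sum>t\<in>T. \<Prod>h<m. emb (c (t h) (z h)) * \<beta> (t h))"
      by (rule sum.reindex_bij_betw[OF phi])
    also have "\<dots> = (\<Prod>h<m. \<Sum>j<r. emb (c j (z h)) * \<beta> j)"
      unfolding T_def by (rule prod_sum_PiE[symmetric]) auto
    also have "\<dots> = (\<Prod>h<m. z h)" using c3 by simp
    finally show ?thesis by simp
  qed
  have "mult_friendly emb n m C Enc"
    unfolding mult_friendly_def using dl prodid by blast
  thus ?thesis using coded unfolding n_def q_def by blast
qed
end
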